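(* Let $n\ge3$ and consider the path graph on $n$ nodes with Laplacian $L_n$. The path is reachable (observable) from a node $i\in\{2,\dots,n-1\}$ if and only if the matrices $N_{i-1}$ and $N_{n-i}$ have no common eigenvalue. Moreover, the eigenvalues common to these two matrices are exactly the unreachable (unobservable) eigenvalues of $L_n$ from node $i$.
   Context: The path graph on nodes $\{1,\dots,n\}$ has edges $\{i,i+1\}$; $L_n$ is tridiagonal with diagonal $(1,2,\dots,2,1)$ and off-diagonal $-1$. Reachable from node $i$ means the pair $(L_n,e_i)$ is reachable; observable means $(L_n,e_i^T)$ is observable. An unreachable (unobservable) eigenvalue from node $i$ is $\lambda$ such that some $v\ne0$ satisfies $L_nv=\lambda v$ and $(v)_i=0$. For $\nu\ge1$, $N_\nu\in\mathbb{R}^{\nu\times\nu}$ is the tridiagonal matrix with diagonal $(1,2,\dots,2)$ and off-diagonal entries $-1$. *)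

theory Defs
  imports "Jordan_Normal_Form.DL_Rank" "Jordan_Normal_Form.Char_Poly"
begin

text \<open>Nodes of the path are 1,...,n; JNF indices are 0-based, so node k is index k-1.\<close>

definition path_laplacian :: "nat \<Rightarrow> real mat" where
  "path_laplacian n = mat n n (\<lambda>(r, c).
     if r = c then (if r = 0 \<or> r = n - 1 then 1 else 2)
     else if r = c + 1 \<or> c = r + 1 then -1 else 0)"

definition N_mat :: "nat \<Rightarrow> real mat" where
  "N_mat \<nu> = mat \<nu> \<nu> (\<lambda>(r, c).
     if r = c then (if r = 0 then 1 else 2)
     else if r = c + 1 \<or> c = r + 1 then -1 else 0)"

definition reach_matrix :: "'a::field mat \<Rightarrow> 'a vec \<Rightarrow> 'a mat" where
  "reach_matrix A b = mat (dim_row A) (dim_row A) (\<lambda>(r, k). ((A ^\<^sub>m k) *\<^sub>v b) $ r)"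

definition obs_matrix :: "'a::field mat \<Rightarrow> 'a vec \<Rightarrow> 'a mat" where
  "obs_matrix A c = mat (dim_row A) (dim_row A) (\<lambda>(k, j). (transpose_mat (A ^\<^sub>m k) *\<^sub>v c) $ j)"

definition reachable :: "'a::field mat \<Rightarrow> 'a vec \<Rightarrow> bool" where
  "reachable A b = (vec_space.rank (dim_row A) (reach_matrix A b) = dim_row A)"

text \<open>observable A c: the pair (A, c^T) is observable (c given as a column vector).\<close>
definition observable :: "'a::field mat \<Rightarrow> 'a vec \<Rightarrow> bool" where
  "observable A c = (vec_space.rank (dim_row A) (obs_matrix A c) = dim_row A)"

text \<open>Unreachable (= unobservable) eigenvalue of L_n from node i (1-based).\<close>
definition unreachable_eigenvalue :: "nat \<Rightarrow> nat \<Rightarrow> real \<Rightarrow> bool" where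
  "unreachable_eigenvalue n i mu =
     (\<exists>v. v \<in> carrier_vec n \<and> v \<noteq> 0\<^sub>v n \<and> path_laplacian n *\<^sub>v v = mu \<cdot>\<^sub>v v \<and> v $ (i - 1) = 0)"

end

theory Submission
  imports Defs
begin

definition tri :: "(nat \<Rightarrow> real) \<Rightarrow> nat \<Rightarrow> real mat" where
  "tri d m = mat m m (\<lambda>(r, c). if r = c then d r else if r = c + 1 \<or> c = r + 1 then -1 else 0)"

lemma path_tri: "path_laplacian n = tri (\<lambda>r. if r = 0 \<or> r = n - 1 then 1 else 2) n"
  unfolding path_laplacian_def tri_def by simp

lemma N_tri: "N_mat n = tri (\<lambda>r. if r = 0 then 1 else 2) n"
  unfolding N_mat_def tri_def by simp

lemma tri_carrier[simp]: "tri d m \<in> carrier_mat m m" unfolding tri_def by simp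

lemma tri_mult:
  assumes v: "v \<in> carrier_vec m" and r: "r < m"
  shows "(tri d m *\<^sub>v v) $ r = d r * v$r - (if 0<r then v$(r-1) else 0) - (if r+1<m then v$(r+1) else 0)"
proof -
  have "(tri d m *\<^sub>v v) $ r = (\<Sum>c<m. (tri d m) $$ (r,c) * v$c)"
    using v r unfolding tri_def by (simp add: mult_mat_vec_def scalar_prod_def lessThan_atLeast0)
  also have "\<dots> = (\<Sum>c<m. (if c = r then d r * v$c else 0) - (if c = r - 1 \<and> 0 < r then v$c else 0)
       - (if c = r + 1 then v$c else 0))"
    using r by (intro sum.cong) (auto simp: tri_def)
  also have "\<dots> = d r * v$r - (if 0<r then v$(r-1) else 0) - (if r+1<m then v$(r+1) else 0)"
    using r by (simp add: sum_subtractf sum.If_cases)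
  finally show ?thesis .
qed

lemma N_dim[simp]: "dim_row (N_mat m) = m" "dim_col (N_mat m) = m"
  unfolding N_mat_def by auto
lemma L_dim[simp]: "dim_row (path_laplacian m) = m" "dim_col (path_laplacian m) = m"
  unfolding path_laplacian_def by auto

lemma N_mult: "u \<in> carrier_vec m \<Longrightarrow> r < m \<Longrightarrow> (N_mat m *\<^sub>v u) $ r =
   (if r = 0 then 1 else 2) * u$r - (if 0<r then u$(r-1) else 0) - (if r+1<m then u$(r+1) else 0)"
  unfolding N_tri by (rule tri_mult)

lemma L_mult: "u \<in> carrier_vec m \<Longrightarrow> r < m \<Longrightarrow> (path_laplacian m *\<^sub>v u) $ r =
   (if r = 0 \<or> r = m - 1 then 1 else 2) * u$r - (if 0<r then u$(r-1) else 0) - (if r+1<m then u$(r+1) else 0)"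
  unfolding path_tri by (rule tri_mult)

lemma N_last:
  assumes u: "u \<in> carrier_vec m" and m: "m \<ge> 1" and ev: "N_mat m *\<^sub>v u = mu \<cdot>\<^sub>v u"
    and z: "u $ (m - 1) = 0"
  shows "u = 0\<^sub>v m"
proof -
  define g where "g j = (if j < m then u$j else 0)" for j
  have key: "g (m-1-t) = 0 \<and> g (m-t) = 0" if "t < m" for t
    using that
  proof (induction t)
    case 0 then show ?case using z by (simp add: g_def)
  next
    case (Suc t)
    define r where "r = m - 1 - t"
    have r: "r < m" "0 < r" using Suc.prems unfolding r_def by auto
    from Suc.IH have ih: "g r = 0" "g (r+1) = 0" using Suc.prems unfolding r_def
      by (auto simp: Suc_diff_Suc)
    have "(N_mat m *\<^sub>v u) $ r = mu * u $ r" using ev r u by simp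
    then have "u $ (r - 1) = 0" using N_mult[OF u r(1)] ih r unfolding g_def
      by (auto split: if_splits)
    moreover have "m - 1 - Suc t = r - 1" "m - Suc t = r" unfolding r_def using Suc.prems by auto
    ultimately show ?case using r ih unfolding g_def by auto
  qed
  show ?thesis
  proof (rule eq_vecI)
    fix j assume "j < dim_vec (0\<^sub>v m :: real vec)"
    then have j: "j < m" by simp
    have "g (m - 1 - (m - 1 - j)) = 0" using key[of "m-1-j"] j by auto
    then show "u $ j = 0\<^sub>v m $ j" using j by (simp add: g_def)
  qed (use u in auto)
qed

lemma N_eig_last:
  assumes "eigenvector (N_mat m) u mu" shows "u $ (m-1) \<noteq> 0"
proof
  assume z: "u $ (m-1) = 0"
  from assms have u: "u \<in> carrier_vec m" "u \<noteq> 0\<^sub>v m" "N_mat m *\<^sub>v u = mu \<cdot>\<^sub>v u"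
    unfolding eigenvector_def by auto
  have "m \<ge> 1" using u by (cases m) auto
  from N_last[OF u(1) this u(3) z] u(2) show False by simp
qed

lemma unreach_imp_common:
  assumes n: "n \<ge> 3" and i: "2 \<le> i" "i \<le> n - 1" and U: "unreachable_eigenvalue n i mu"
  shows "eigenvalue (N_mat (i - 1)) mu \<and> eigenvalue (N_mat (n - i)) mu"
proof -
  obtain v where v: "v \<in> carrier_vec n" "v \<noteq> 0\<^sub>v n" "path_laplacian n *\<^sub>v v = mu \<cdot>\<^sub>v v" "v $ (i-1) = 0"
    using U unfolding unreachable_eigenvalue_def by auto
  have Lv: "(if r = 0 \<or> r = n - 1 then 1 else 2) * v$r - (if 0<r then v$(r-1) else 0) - (if r+1<n then v$(r+1) else 0)
     = mu * v $ r" if "r < n" for r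
    using L_mult[OF v(1) that] v(3) v(1) that by simp
  define a where "a = i - 1"
  define b where "b = n - i"
  define u where "u = vec a (\<lambda>r. v$r)"
  define w where "w = vec b (\<lambda>r. v$(n-1-r))"
  have uc: "u \<in> carrier_vec a" and wc: "w \<in> carrier_vec b" unfolding u_def w_def by auto
  have a1: "a \<ge> 1" "a < n" and b1: "b \<ge> 1" "b < n" and ab: "a + b + 1 = n"
    using n i unfolding a_def b_def by auto
  have Nu: "N_mat a *\<^sub>v u = mu \<cdot>\<^sub>v u"
  proof (rule eq_vecI)
    fix r assume "r < dim_vec (mu \<cdot>\<^sub>v u)"
    then have r: "r < a" using uc by simp
    have "(N_mat a *\<^sub>v u) $ r = (if r = 0 then 1 else 2) * v$r - (if 0<r then v$(r-1) else 0)
        - (if r+1<a then v$(r+1) else 0)"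
      using N_mult[OF uc r] r unfolding u_def by simp
    also have "\<dots> = mu * v $ r"
    proof -
      have v4: "v $ a = 0" using v(4) unfolding a_def by simp
      have "\<not> r+1<a \<Longrightarrow> r+1 = a" using r by simp
      then have h: "(if r+1<a then v$(r+1) else 0) = v$(r+1)" using v4
        by (cases "r+1<a") auto
      have "r \<noteq> n - 1" "r + 1 < n" using r a1 by auto
      then show ?thesis using Lv[of r] r a1 h by simp
    qed
    finally show "(N_mat a *\<^sub>v u) $ r = (mu \<cdot>\<^sub>v u) $ r" using r uc unfolding u_def by simp
  qed (use uc in auto)
  have Nw: "N_mat b *\<^sub>v w = mu \<cdot>\<^sub>v w"
  proof (rule eq_vecI)
    fix r assume "r < dim_vec (mu \<cdot>\<^sub>v w)"
    then have r: "r < b" using wc by simp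
    define s where "s = n - 1 - r"
    have s: "s < n" "0 < s" "a < s" using r ab unfolding s_def by auto
    have "(N_mat b *\<^sub>v w) $ r = (if r = 0 then 1 else 2) * v$s - (if 0<r then v$(s+1) else 0)
        - (if r+1<b then v$(s-1) else 0)"
    proof -
      have i1: "w $ r = v $ s" using r unfolding w_def s_def by simp
      have ar: "0<r \<Longrightarrow> n - 1 - (r - 1) = s + 1" unfolding s_def using r ab by auto
      have i2: "w $ (r-1) = v $ (s+1)" if h: "0 < r"
      proof -
        have "w $ (r-1) = v $ (n-1-(r-1))" unfolding w_def using r index_vec[of "r-1" b "\<lambda>r. v $ (n - 1 - r)"] by linarith
        then show ?thesis using ar[OF h] by metis
      qed
      have i3: "r + 1 < b \<Longrightarrow> w $ (r+1) = v $ (s-1)" using r s unfolding w_def s_def by simp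
      show ?thesis using N_mult[OF wc r] i1 i2 i3 by simp
    qed
    also have "\<dots> = mu * v $ s"
    proof -
      have "r + 1 = b \<Longrightarrow> v $ (s-1) = 0" using v(4) ab unfolding a_def s_def by auto
      moreover have "\<not> r+1<b \<Longrightarrow> r+1 = b" using r by simp
      ultimately have h: "(if r+1<b then v$(s-1) else 0) = v$(s-1)" by (cases "r+1<b") auto
      moreover have "(s = n - 1) = (r = 0)" "(s + 1 < n) = (0 < r)" using r ab unfolding s_def by auto
      ultimately show ?thesis using Lv[of s] s h by (simp only:) simp
    qed
    finally show "(N_mat b *\<^sub>v w) $ r = (mu \<cdot>\<^sub>v w) $ r" using r wc unfolding w_def s_def by simp
  qed (use wc in auto)
  have mid: "u $ (a-1) + w $ (b-1) = 0"
  proof -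
    have v4: "v $ a = 0" using v(4) unfolding a_def by simp
    have e: "n - 1 - (b - 1) = a + 1" using a1 b1 ab by auto
    have u1: "u $ (a-1) = v $ (a-1)" unfolding u_def using a1 by simp
    have "w $ (b-1) = v $ (n - 1 - (b-1))" unfolding w_def using b1
      index_vec[of "b-1" b "\<lambda>r. v $ (n - 1 - r)"] by linarith
    then have w1: "w $ (b-1) = v $ (a+1)" using e by metis
    have "a + 1 < n" "0 < a" using ab a1 b1 by auto
    then have "(if a = 0 \<or> a = n - 1 then 1 else 2) * v$a - v$(a-1) - v$(a+1) = mu * v$a"
      using Lv[of a] by simp
    then show ?thesis using u1 w1 v4 by simp
  qed
  have uz: "u \<noteq> 0\<^sub>v a"
  proof
    assume "u = 0\<^sub>v a"
    then have "u $ (a-1) = 0" using a1 by auto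
    then have "w $ (b-1) = 0" using mid by simp
    from N_last[OF wc b1(1) Nw this] have w0: "w = 0\<^sub>v b" .
    have "v = 0\<^sub>v n"
    proof (rule eq_vecI)
      fix r assume "r < dim_vec (0\<^sub>v n :: real vec)"
      then have r: "r < n" by simp
      consider "r < a" | "r = a" | "a < r" by linarith
      then show "v $ r = 0\<^sub>v n $ r"
      proof cases
        case 1 then have "u $ r = 0" using \<open>u = 0\<^sub>v a\<close> by simp
        then show ?thesis using 1 r unfolding u_def by simp
      next
        case 2 then show ?thesis using v(4) r unfolding a_def by simp
      next
        case 3 then have "w $ (n-1-r) = 0" using w0 ab r by simp
        moreover have "n - 1 - (n - 1 - r) = r" "n-1-r < b" using 3 r ab by auto
        ultimately show ?thesis using r unfolding w_def by simp
      qed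
    qed (use v in auto)
    then show False using v(2) by simp
  qed
  have wz: "w \<noteq> 0\<^sub>v b"
  proof
    assume "w = 0\<^sub>v b"
    then have "w $ (b-1) = 0" using b1 by auto
    then have "u $ (a-1) = 0" using mid by simp
    from N_last[OF uc a1(1) Nu this] have u0: "u = 0\<^sub>v a" .
    with uz show False by simp
  qed
  show ?thesis unfolding eigenvalue_def eigenvector_def a_def[symmetric] b_def[symmetric]
    using uc wc Nu Nw uz wz by auto
qed

lemma common_imp_unreach:
  assumes n: "n \<ge> 3" and i: "2 \<le> i" "i \<le> n - 1"
    and E: "eigenvalue (N_mat (i - 1)) mu" "eigenvalue (N_mat (n - i)) mu"
  shows "unreachable_eigenvalue n i mu"
proof -
  define a where "a = i - 1"
  define b where "b = n - i"
  have a1: "a \<ge> 1" "a < n" and b1: "b \<ge> 1" "b < n" and ab: "a + b + 1 = n"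
    using n i unfolding a_def b_def by auto
  obtain u where u: "eigenvector (N_mat a) u mu" using E(1) unfolding eigenvalue_def a_def by auto
  obtain w where w: "eigenvector (N_mat b) w mu" using E(2) unfolding eigenvalue_def b_def by auto
  have uc: "u \<in> carrier_vec a" "N_mat a *\<^sub>v u = mu \<cdot>\<^sub>v u" using u unfolding eigenvector_def by auto
  have wc: "w \<in> carrier_vec b" "N_mat b *\<^sub>v w = mu \<cdot>\<^sub>v w" using w unfolding eigenvector_def by auto
  have ul: "u $ (a-1) \<noteq> 0" using N_eig_last[OF u] .
  have wl: "w $ (b-1) \<noteq> 0" using N_eig_last[OF w] .
  define c where "c = - u $ (a-1) / w $ (b-1)"
  have cw: "c * w $ (b-1) = - u $ (a-1)" using wl unfolding c_def by simp
  have Nu: "(if r = 0 then 1 else 2) * u$r - (if 0<r then u$(r-1) else 0) - (if r+1<a then u$(r+1) else 0)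
     = mu * u $ r" if "r < a" for r
    using N_mult[OF uc(1) that] uc that by simp
  have Nw: "(if r = 0 then 1 else 2) * w$r - (if 0<r then w$(r-1) else 0) - (if r+1<b then w$(r+1) else 0)
     = mu * w $ r" if "r < b" for r
    using N_mult[OF wc(1) that] wc that by simp
  define v where "v = vec n (\<lambda>r. if r < a then u $ r else if r = a then 0 else c * w $ (n-1-r))"
  have vc: "v \<in> carrier_vec n" unfolding v_def by simp
  have Lv: "path_laplacian n *\<^sub>v v = mu \<cdot>\<^sub>v v"
  proof (rule eq_vecI)
    fix r assume "r < dim_vec (mu \<cdot>\<^sub>v v)"
    then have r: "r < n" using vc by simp
    have "(path_laplacian n *\<^sub>v v) $ r = (if r = 0 \<or> r = n - 1 then 1 else 2) * v$r
      - (if 0<r then v$(r-1) else 0) - (if r+1<n then v$(r+1) else 0)" using L_mult[OF vc r] .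
    also have "\<dots> = mu * v $ r"
    proof -
      consider "r < a" | "r = a" | "a < r" by linarith
      then show ?thesis
      proof cases
        case 1
        have "r \<noteq> n - 1" "r + 1 < n" using 1 ab by auto
        then show ?thesis using Nu[OF 1] 1 r unfolding v_def by (auto split: if_splits)
      next
        case 2
        have "n - 1 - (a + 1) = b - 1" "a - 1 < a" "a \<noteq> 0" "a + 1 < n" using ab a1 b1 by auto
        then show ?thesis using 2 r cw unfolding v_def by auto
      next
        case 3
        define t where "t = n - 1 - r"
        have tt: "t = n - 1 - r" by (simp add: t_def)
        have t: "t < b" "r = n - 1 - t" using 3 r ab unfolding t_def by auto
        have e1: "(r = n - 1) = (t = 0)" "(r + 1 < n) = (0 < t)" using t ab by auto
        have e2: "0 < t \<Longrightarrow> n - 1 - (r + 1) = t - 1" "0 < t \<Longrightarrow> r + 1 < n" using t ab by auto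
        have e3: "n - 1 - (r - 1) = t + 1" "\<not> r - 1 < a" "r - 1 = a \<longleftrightarrow> t + 1 = b"
          "r - 1 < n" "0 < r" using t ab 3 by auto
        have "c * ((if t = 0 then 1 else 2) * w$t - (if 0<t then w$(t-1) else 0) - (if t+1<b then w$(t+1) else 0))
           = c * (mu * w $ t)" using Nw[OF t(1)] by simp
        then show ?thesis using 3 r t(1) e1 e2 e3 unfolding v_def t_def[symmetric]
          using tt by (auto split: if_splits simp: algebra_simps)
      qed
    qed
    finally show "(path_laplacian n *\<^sub>v v) $ r = (mu \<cdot>\<^sub>v v) $ r" using r vc by simp
  qed (use vc in auto)
  have "v $ (a-1) \<noteq> 0" using ul a1 unfolding v_def by auto
  then have "v \<noteq> 0\<^sub>v n" using a1 by auto
  moreover have "v $ (i - 1) = 0" using a1 unfolding v_def a_def by auto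
  ultimately show ?thesis unfolding unreachable_eigenvalue_def using vc Lv by blast
qed

definition lam :: "nat \<Rightarrow> nat \<Rightarrow> real" where
  "lam n j = 2 - 2 * cos (real j * pi / real n)"

definition evec :: "nat \<Rightarrow> nat \<Rightarrow> real vec" where
  "evec n j = vec n (\<lambda>r. cos (real j * pi / real n * (2 * real r + 1) / 2))"

lemma cos_rec: fixes t x :: real shows "cos (t * (2 * (x - 1) + 1) / 2) + cos (t * (2 * (x + 1) + 1) / 2) = 2 * cos t * cos (t * (2 * x + 1) / 2)"
proof -
  define y where "y = t * (2 * x + 1) / 2"
  have e1: "t * (2 * (x - 1) + 1) / 2 = y - t" and e2: "t * (2 * (x + 1) + 1) / 2 = y + t"
    unfolding y_def by (simp_all add: field_simps)
  show ?thesis unfolding e1 e2 y_def[symmetric] cos_add cos_diff by (simp add: algebra_simps)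
qed

lemma evec_eig:
  assumes n: "n \<ge> 2" and j: "j < n"
  shows "path_laplacian n *\<^sub>v evec n j = lam n j \<cdot>\<^sub>v evec n j"
proof (rule eq_vecI)
  define t where "t = real j * pi / real n"
  define F where "F x = cos (t * (2 * x + 1) / 2)" for x :: real
  have ec: "evec n j \<in> carrier_vec n" unfolding evec_def by simp
  have ev: "evec n j $ r = F (real r)" if "r < n" for r using that unfolding evec_def F_def t_def by simp
  have rec: "F (x - 1) + F (x + 1) = 2 * cos t * F x" for x unfolding F_def by (rule cos_rec)
  have F0: "F (-1) = F 0"
  proof -
    have "t * (2 * (-1) + 1) / 2 = - (t * (2 * 0 + 1) / 2)" by simp
    then show ?thesis unfolding F_def by (metis cos_minus)
  qed
  have Fn: "F (real n) = F (real n - 1)"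
  proof -
    have tn: "t * real n = real j * pi" unfolding t_def using n by simp
    have "t * (2 * real n + 1) / 2 = t * real n + t/2" "t * (2 * (real n - 1) + 1) / 2 = t * real n - t/2"
      by (simp_all add: field_simps)
    then have e: "t * (2 * real n + 1) / 2 = real j * pi + t/2" "t * (2 * (real n - 1) + 1) / 2 = real j * pi - t/2"
      using tn by simp_all
    show ?thesis unfolding F_def e cos_add cos_diff by simp
  qed
  fix r assume "r < dim_vec (lam n j \<cdot>\<^sub>v evec n j)"
  then have r: "r < n" using ec by simp
  have L: "(path_laplacian n *\<^sub>v evec n j) $ r = (if r = 0 \<or> r = n - 1 then 1 else 2) * F r
     - (if 0<r then F (real r - 1) else 0) - (if r+1<n then F (real r + 1) else 0)"
  proof -
    have a: "0 < r \<Longrightarrow> evec n j $ (r - 1) = F (real r - 1)" using ev[of "r-1"] r by (simp add: of_nat_diff)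
    have b: "r + 1 < n \<Longrightarrow> evec n j $ (r + 1) = F (real r + 1)" using ev[of "r+1"] by (simp add: add.commute)
    show ?thesis using L_mult[OF ec r] ev[OF r] a b by simp
  qed
  have "(path_laplacian n *\<^sub>v evec n j) $ r = lam n j * F r"
  proof -
    consider "r = 0" | "r = n - 1" "r \<noteq> 0" | "0 < r" "r + 1 < n" using r by linarith
    then show ?thesis
    proof cases
      case 1
      have "F 1 = 2*cos t*F 0 - F 0" using rec[of 0] F0 by simp
      moreover have "lam n j * F (real r) = 2 * F r - 2 * (cos t * F r)" unfolding lam_def t_def by (simp add: algebra_simps)
      moreover have "r \<noteq> n - 1" "r + 1 < n" using 1 n by auto
      ultimately show ?thesis using L 1 by simp
    next
      case 2
      have "real r = real n - 1" using 2 n by simp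
      then have "F (real r - 1) = 2*cos t*F r - F r" using rec[of "real r"] Fn by simp
      moreover have "lam n j * F (real r) = 2 * F r - 2 * (cos t * F r)" unfolding lam_def t_def by (simp add: algebra_simps)
      moreover have "\<not> r + 1 < n" using 2 n by auto
      ultimately show ?thesis using L 2 by simp
    next
      case 3
      have "F (real r - 1) + F (real r + 1) = 2*cos t*F r" using rec[of "real r"] by simp
      moreover have "lam n j * F (real r) = 2 * F r - 2 * (cos t * F r)" unfolding lam_def t_def by (simp add: algebra_simps)
      moreover have "r \<noteq> n - 1" using 3 by auto
      ultimately show ?thesis using L 3 by simp
    qed
  qed
  then show "(path_laplacian n *\<^sub>v evec n j) $ r = (lam n j \<cdot>\<^sub>v evec n j) $ r" using r ec ev by simp
qed (simp add: evec_def)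

lemma evec_nz: assumes "j < n" shows "evec n j $ 0 \<noteq> 0"
proof -
  have "0 < cos (real j * pi / real n * (2 * real 0 + 1) / 2)"
  proof (rule cos_gt_zero_pi)
    have "real j * pi / real n * (2 * real 0 + 1) / 2 \<ge> 0" by simp
    then show "- (pi / 2) < real j * pi / real n * (2 * real 0 + 1) / 2" using pi_gt_zero by linarith
    have "real j / real n < 1" using assms by simp
    then have "real j * pi / real n < pi" using pi_gt_zero
proof -
      have "real j * pi / real n = (real j / real n) * pi" by simp
      moreover have "(real j / real n) * pi < 1 * pi" using mult_strict_right_mono[of "real j / real n" 1 pi] \<open>real j / real n < 1\<close> pi_gt_zero by linarith
      ultimately show ?thesis by simp
    qed
    then show "real j * pi / real n * (2 * real 0 + 1) / 2 < pi / 2" by simp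
  qed
  then show ?thesis using assms unfolding evec_def by auto
qed

lemma lam_inj: assumes "j < n" "k < n" "lam n j = lam n k" shows "j = k"
proof -
  have b: "0 \<le> real m * pi / real n \<and> real m * pi / real n \<le> pi" if "m < n" for m
  proof -
    have "real m / real n \<le> 1" using that by simp
    then show ?thesis using pi_gt_zero
proof -
      have "real m * pi / real n = (real m / real n) * pi" by simp
      moreover have "(real m / real n) * pi \<le> 1 * pi" using mult_right_mono[of "real m / real n" 1 pi] \<open>real m / real n \<le> 1\<close> pi_gt_zero by linarith
      ultimately show ?thesis by simp
    qed
  qed
  have "cos (real j * pi / real n) = cos (real k * pi / real n)" using assms(3) unfolding lam_def by simp
  then have "real j * pi / real n = real k * pi / real n" using b[OF assms(1)] b[OF assms(2)] cos_inj_pi by blast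
  then show ?thesis using assms by auto
qed

lemma L_carrier[simp]: "path_laplacian n \<in> carrier_mat n n" unfolding path_laplacian_def by simp

lemma L_sym: "transpose_mat (path_laplacian n) = path_laplacian n"
  by (rule eq_matI) (auto simp: path_laplacian_def)

lemma pow_eig:
  fixes A :: "real mat"
  assumes A: "A \<in> carrier_mat n n" and S: "transpose_mat A = A" and v: "v \<in> carrier_vec n"
    and ev: "A *\<^sub>v v = mu \<cdot>\<^sub>v v"
  shows "x \<in> carrier_vec n \<Longrightarrow> (A ^\<^sub>m k *\<^sub>v x) \<bullet> v = mu ^ k * (x \<bullet> v)"
proof (induction k arbitrary: x)
  case 0 then show ?case using A by simp
next
  case (Suc k)
  have Ax: "A *\<^sub>v x \<in> carrier_vec n" using A Suc.prems by simp
  have "(A ^\<^sub>m Suc k *\<^sub>v x) = A ^\<^sub>m k *\<^sub>v (A *\<^sub>v x)"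
    using A Suc.prems assoc_mult_mat_vec[of "A ^\<^sub>m k" n n A n x] by simp
  then have "(A ^\<^sub>m Suc k *\<^sub>v x) \<bullet> v = mu ^ k * ((A *\<^sub>v x) \<bullet> v)" using Suc.IH[OF Ax] by simp
  also have "(A *\<^sub>v x) \<bullet> v = x \<bullet> (A *\<^sub>v v)"
    using transpose_vec_mult_scalar[OF A v Suc.prems] S by simp
  also have "\<dots> = mu * (x \<bullet> v)" using ev Suc.prems v by simp
  finally show ?case by simp
qed

lemma pow_comm: assumes A: "A \<in> carrier_mat n n" shows "A * A ^\<^sub>m k = A ^\<^sub>m k * A"
proof (induction k)
  case 0 then show ?case using A by simp
next
  case (Suc k)
  have "A * A ^\<^sub>m Suc k = (A * A ^\<^sub>m k) * A" using A by (simp add: assoc_mult_mat[of A n n _ n A n])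
  then show ?case using Suc.IH by simp
qed

lemma pow_transpose: fixes A :: "real mat" assumes A: "A \<in> carrier_mat n n" and S: "transpose_mat A = A"
  shows "transpose_mat (A ^\<^sub>m k) = A ^\<^sub>m k"
proof (induction k)
  case 0 then show ?case using A by simp
next
  case (Suc k)
  have "transpose_mat (A ^\<^sub>m Suc k) = transpose_mat A * transpose_mat (A ^\<^sub>m k)"
    using transpose_mult[of "A ^\<^sub>m k" n n A n] A by simp
  then show ?case using Suc.IH S pow_comm[OF A] by simp
qed

lemma reach_carrier: "A \<in> carrier_mat n n \<Longrightarrow> reach_matrix A b \<in> carrier_mat n n"
  unfolding reach_matrix_def by auto

lemma reach_col: assumes A: "A \<in> carrier_mat n n" "b \<in> carrier_vec n" "k < n"
  shows "col (reach_matrix A b) k = A ^\<^sub>m k *\<^sub>v b"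
  using assms unfolding reach_matrix_def by (intro eq_vecI) auto

lemma obs_transpose: fixes A :: "real mat" assumes A: "A \<in> carrier_mat n n" and S: "transpose_mat A = A"
  shows "obs_matrix A c = transpose_mat (reach_matrix A c)"
  using A pow_transpose[OF A S] unfolding obs_matrix_def reach_matrix_def by (intro eq_matI) auto

lemma KT_entry:
  assumes n: "h < n" and v: "v \<in> carrier_vec n" and k: "k < n"
  shows "(transpose_mat (reach_matrix (path_laplacian n) (unit_vec n h)) *\<^sub>v v) $ k
     = (path_laplacian n ^\<^sub>m k *\<^sub>v unit_vec n h) \<bullet> v"
proof -
  have Kc: "reach_matrix (path_laplacian n) (unit_vec n h) \<in> carrier_mat n n" by (rule reach_carrier) simp
  show ?thesis using Kc k reach_col[of "path_laplacian n" n "unit_vec n h" k] by simp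
qed

lemma det_K_zero:
  assumes n: "n \<ge> 2" and h: "h < n"
  shows "det (reach_matrix (path_laplacian n) (unit_vec n h)) = 0 \<longleftrightarrow>
     (\<exists>mu v. v \<in> carrier_vec n \<and> v \<noteq> 0\<^sub>v n \<and> path_laplacian n *\<^sub>v v = mu \<cdot>\<^sub>v v \<and> v $ h = 0)"
proof -
  define L where "L = path_laplacian n"
  define e where "e = (unit_vec n h :: real vec)"
  define K where "K = reach_matrix L e"
  have Lc: "L \<in> carrier_mat n n" and LS: "transpose_mat L = L" unfolding L_def by (simp_all add: L_sym)
  have ec: "e \<in> carrier_vec n" unfolding e_def by simp
  have Kc: "K \<in> carrier_mat n n" unfolding K_def using Lc by (rule reach_carrier)
  have KTc: "transpose_mat K \<in> carrier_mat n n" using Kc by simp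
  have KT: "(transpose_mat K *\<^sub>v v) $ k = mu ^ k * v $ h"
    if v: "v \<in> carrier_vec n" "L *\<^sub>v v = mu \<cdot>\<^sub>v v" and k: "k < n" for v mu k
  proof -
    have "(transpose_mat K *\<^sub>v v) $ k = (L ^\<^sub>m k *\<^sub>v e) \<bullet> v"
      using KT_entry[OF h v(1) k] unfolding K_def L_def e_def .
    also have "\<dots> = mu ^ k * (e \<bullet> v)" using pow_eig[OF Lc LS v ec] .
    also have "e \<bullet> v = v $ h" unfolding e_def using v h by simp
    finally show ?thesis .
  qed
  show ?thesis unfolding L_def[symmetric] e_def[symmetric] K_def[symmetric]
  proof
    assume "det K = 0"
    then obtain c where c: "c \<in> carrier_vec n" "c \<noteq> 0\<^sub>v n" "K *\<^sub>v c = 0\<^sub>v n"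
      using det_0_iff_vec_prod_zero_field[OF Kc] by auto
    define p where "p = (\<Sum>k<n. monom (c $ k) k)"
    have pv: "poly p x = (\<Sum>k<n. c $ k * x ^ k)" for x unfolding p_def by (simp add: poly_sum poly_monom)
    have pc: "coeff p k = c $ k" if "k < n" for k
      unfolding p_def using that by (simp add: coeff_sum coeff_monom)
    have pd: "degree p < n"
    proof -
      have "degree p \<le> n - 1" unfolding p_def
        by (rule degree_sum_le) (use n in \<open>auto intro: order.trans[OF degree_monom_le]\<close>)
      then show ?thesis using n by simp
    qed
    have root: "evec n j $ h * poly p (lam n j) = 0" if j: "j < n" for j
    proof -
      define v where "v = evec n j"
      have vc: "v \<in> carrier_vec n" unfolding v_def evec_def by simp
      have ev: "L *\<^sub>v v = lam n j \<cdot>\<^sub>v v" unfolding v_def L_def using evec_eig[OF n j] .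
      have "(transpose_mat K *\<^sub>v v) \<bullet> c = v \<bullet> (K *\<^sub>v c)" by (rule transpose_vec_mult_scalar[OF Kc c(1) vc])
      also have "\<dots> = 0" using c(3) vc by simp
      finally have 0: "(transpose_mat K *\<^sub>v v) \<bullet> c = 0" .
      have "(transpose_mat K *\<^sub>v v) \<bullet> c = (\<Sum>k<n. (lam n j ^ k * v $ h) * c $ k)"
        unfolding scalar_prod_def using c(1) KTc KT[OF vc ev] by (simp add: lessThan_atLeast0)
      also have "\<dots> = v $ h * poly p (lam n j)" unfolding pv by (simp add: sum_distrib_left algebra_simps)
      finally show ?thesis using 0 unfolding v_def by simp
    qed
    show "\<exists>mu v. v \<in> carrier_vec n \<and> v \<noteq> 0\<^sub>v n \<and> L *\<^sub>v v = mu \<cdot>\<^sub>v v \<and> v $ h = 0"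
    proof (rule ccontr)
      assume nex: "\<not> ?thesis"
      have nz: "evec n j $ h \<noteq> 0" if j: "j < n" for j
      proof
        assume "evec n j $ h = 0"
        moreover have "evec n j \<in> carrier_vec n" unfolding evec_def by simp
        moreover have "evec n j \<noteq> 0\<^sub>v n" using evec_nz[OF j] n by auto
        moreover have "L *\<^sub>v evec n j = lam n j \<cdot>\<^sub>v evec n j" unfolding L_def using evec_eig[OF n j] .
        ultimately show False using nex by blast
      qed
      have roots: "poly p x = poly 0 x" if "x \<in> lam n ` {..<n}" for x
        using root nz that by auto
      have card: "card (lam n ` {..<n}) = n"
        by (subst card_image) (auto intro!: inj_onI lam_inj)
      have "p = 0" by (rule poly_eqI_degree[OF roots]) (use card pd n in auto)
      then have "c = 0\<^sub>v n"
      proof (intro eq_vecI)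
        fix i assume "p = 0" "i < dim_vec (0\<^sub>v n :: real vec)"
        then show "c $ i = 0\<^sub>v n $ i" using pc[of i] by simp
      qed (use c(1) in simp)
      with c(2) show False by simp
    qed
  next
    assume "\<exists>mu v. v \<in> carrier_vec n \<and> v \<noteq> 0\<^sub>v n \<and> L *\<^sub>v v = mu \<cdot>\<^sub>v v \<and> v $ h = 0"
    then obtain mu v where v: "v \<in> carrier_vec n" "v \<noteq> 0\<^sub>v n" "L *\<^sub>v v = mu \<cdot>\<^sub>v v" "v $ h = 0" by auto
    have "transpose_mat K *\<^sub>v v = 0\<^sub>v n"
      by (rule eq_vecI) (use KT[OF v(1) v(3)] v(4) KTc in auto)
    then have "det (transpose_mat K) = 0" using det_0_iff_vec_prod_zero_field[OF KTc] v by auto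
    then show "det K = 0" using det_transpose[OF Kc] by simp
  qed
qed

theorem mainTheorem6:
  fixes n i :: nat
  assumes "n \<ge> 3" and "2 \<le> i" and "i \<le> n - 1"
  shows "(reachable (path_laplacian n) (unit_vec n (i - 1)) \<longleftrightarrow>
            \<not> (\<exists>mu. eigenvalue (N_mat (i - 1)) mu \<and> eigenvalue (N_mat (n - i)) mu))
       \<and> (observable (path_laplacian n) (unit_vec n (i - 1)) \<longleftrightarrow>
            \<not> (\<exists>mu. eigenvalue (N_mat (i - 1)) mu \<and> eigenvalue (N_mat (n - i)) mu))
       \<and> (\<forall>mu. (eigenvalue (N_mat (i - 1)) mu \<and> eigenvalue (N_mat (n - i)) mu)
               \<longleftrightarrow> unreachable_eigenvalue n i mu)"
proof -
  have C: "(eigenvalue (N_mat (i - 1)) mu \<and> eigenvalue (N_mat (n - i)) mu) \<longleftrightarrow> unreachable_eigenvalue n i mu" for mu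
    using unreach_imp_common[OF assms] common_imp_unreach[OF assms] by blast
  define K where "K = reach_matrix (path_laplacian n) (unit_vec n (i - 1))"
  have Kc: "K \<in> carrier_mat n n" unfolding K_def by (rule reach_carrier) simp
  have h: "i - 1 < n" "n \<ge> 2" using assms by auto
  have D: "det K = 0 \<longleftrightarrow> (\<exists>mu. eigenvalue (N_mat (i - 1)) mu \<and> eigenvalue (N_mat (n - i)) mu)"
    unfolding C unreachable_eigenvalue_def K_def using det_K_zero[OF h(2) h(1)] by blast
  have R: "reachable (path_laplacian n) (unit_vec n (i - 1)) \<longleftrightarrow> det K \<noteq> 0"
    unfolding reachable_def K_def[symmetric] using vec_space.det_rank_iff[OF Kc] by simp
  have O: "observable (path_laplacian n) (unit_vec n (i - 1)) \<longleftrightarrow> det K \<noteq> 0"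
  proof -
    have "obs_matrix (path_laplacian n) (unit_vec n (i - 1)) = transpose_mat K"
      unfolding K_def by (rule obs_transpose[OF L_carrier L_sym])
    moreover have "transpose_mat K \<in> carrier_mat n n" using Kc by simp
    ultimately show ?thesis unfolding observable_def using vec_space.det_rank_iff[of "transpose_mat K" n]
        det_transpose[OF Kc] by simp
  qed
  show ?thesis using C D R O by blast
qed

end
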